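(* Assume Hypotheses 1, 2 and 3 (see context). For each $x\in\Gamma$, the set $T(x)$ is a linear subspace of $X$.
   Context: System $\dot x=F(x)$ with $F=(f,g)$, i.e. $\dot a=f(a,z)$, $\dot z=g(a,z)$, $(a,z)\in\mathbb{R}^n\times\mathbb{R}^m$, $X=\mathbb{R}^n\times\mathbb{R}^m$, flow $\Phi(t,x)$. Euclidean inner product, norm, operator norm. $\mathcal{L}(x_1,x_2)=\|a_2-a_1\|^2-\|z_2-z_1\|^2$, $\mathcal{C}(x)=\{x'\in X:\mathcal{L}(x',x)\ge0\}$, $\mathbf{0}$ the zero vector of $X$; $\Pi(a,z)=a$, $\Pi_\perp(a,z)=z$; $\mathbb{B}_d(x)=\{(a',z'):\|a'-a\|\le d,\|z'-z\|\le d\}$. $\Gamma\subseteq U$ positively invariant means $\Phi(t,x)$ is defined for all $t\ge0$ for $x\in\Gamma$ and $\Phi(t,\Gamma)\subseteq\Gamma$. Hypothesis 1: $U$ open and convex, and there is $d>0$ with $\mathcal{C}(x)\cap U\subset\mathbb{B}_d(x)$ for all $x\in U$. Hypothesis 2: $f,g$ are $C^1$ on $U$; there exist continuous $\alpha>0$, $\ell\ge0$ on $U$ and $c_1>0$ with, for all $x\in U$: $\langle a',D_af(x)a'\rangle\ge\alpha(x)\|a'\|^2$; $\langle z',D_zg(x)z'\rangle\le\ell(x)\|z'\|^2$; $\alpha(x)\ge\ell(x)+\|D_zf(x)\|+\|D_ag(x)\|+c_1$. Hypothesis 3: $\Gamma\subset U$ is positively invariant and $\Pi_\perp(\Gamma)=\Pi_\perp(U)$.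 For $x\in\Gamma$, $Q(t,x)$ ($t\ge0$) denotes the fundamental matrix solution of the variational equation $\dot{\mathbf{x}}=DF(\Phi(t,x))\mathbf{x}$ with $Q(0,x)=I$. For $x\in\Gamma$, $T(x):=\{\mathbf{x}\in X: \mathcal{L}(Q(t,x)\mathbf{x},\mathbf{0})\le0\text{ for all }t\ge0\}$. *)

theory Defs
  imports "HOL-Analysis.Analysis"
begin

text \<open>State space X = R^n x R^m, realised as the product type (real^'n) x (real^'m),
whose inner product and norm are the Euclidean ones.\<close>

definition Lfun :: "(real^'n) \<times> (real^'m) \<Rightarrow> (real^'n) \<times> (real^'m) \<Rightarrow> real" where
  "Lfun x1 x2 = (norm (fst x2 - fst x1))\<^sup>2 - (norm (snd x2 - snd x1))\<^sup>2"

definition Lcone :: "(real^'n) \<times> (real^'m) \<Rightarrow> ((real^'n) \<times> (real^'m)) set" where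
  "Lcone x = {x'. Lfun x' x \<ge> 0}"

definition boxB :: "real \<Rightarrow> (real^'n) \<times> (real^'m) \<Rightarrow> ((real^'n) \<times> (real^'m)) set" where
  "boxB d x = {(a', z'). norm (a' - fst x) \<le> d \<and> norm (z' - snd x) \<le> d}"

definition vfield ::
  "((real^'n) \<times> (real^'m) \<Rightarrow> real^'n) \<Rightarrow> ((real^'n) \<times> (real^'m) \<Rightarrow> real^'m)
   \<Rightarrow> (real^'n) \<times> (real^'m) \<Rightarrow> (real^'n) \<times> (real^'m)" where
  "vfield f g x = (f x, g x)"

definition DFmat ::
  "((real^'n) \<times> (real^'m) \<Rightarrow> (((real^'n) \<times> (real^'m)) \<Rightarrow>\<^sub>L (real^'n)))
   \<Rightarrow> ((real^'n) \<times> (real^'m) \<Rightarrow> (((real^'n) \<times> (real^'m)) \<Rightarrow>\<^sub>L (real^'m)))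
   \<Rightarrow> (real^'n) \<times> (real^'m) \<Rightarrow> (((real^'n) \<times> (real^'m)) \<Rightarrow>\<^sub>L ((real^'n) \<times> (real^'m)))" where
  "DFmat f' g' x = Blinfun (\<lambda>v. (blinfun_apply (f' x) v, blinfun_apply (g' x) v))"

definition Tset ::
  "(real \<Rightarrow> (real^'n) \<times> (real^'m) \<Rightarrow> (((real^'n) \<times> (real^'m)) \<Rightarrow>\<^sub>L ((real^'n) \<times> (real^'m))))
   \<Rightarrow> (real^'n) \<times> (real^'m) \<Rightarrow> ((real^'n) \<times> (real^'m)) set" where
  "Tset Q x = {v. \<forall>t\<ge>0. Lfun (blinfun_apply (Q t x) v) 0 \<le> 0}"

end

theory Submission
  imports Defs
begin


lemma normsq_deriv:
  fixes a :: "real \<Rightarrow> 'a::real_inner"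
  assumes "(a has_vector_derivative a') (at t)"
  shows "((\<lambda>s. (norm (a s))\<^sup>2) has_real_derivative 2 * inner (a t) a') (at t)"
proof -
  have "((\<lambda>s. inner (a s) (a s)) has_vector_derivative inner (a t) a' + inner a' (a t)) (at t)"
    using bounded_bilinear.has_vector_derivative[OF bounded_bilinear_inner assms assms] by simp
  then show ?thesis
    by (simp add: has_real_derivative_iff_has_vector_derivative power2_norm_eq_inner inner_commute)
qed

lemma pos_persist:
  fixes h h' :: "real \<Rightarrow> real"
  assumes cont: "continuous_on {t0..} h"
    and der: "\<And>s. s > t0 \<Longrightarrow> (h has_real_derivative h' s) (at s)"
    and pos: "\<And>s. s > t0 \<Longrightarrow> h s > 0 \<Longrightarrow> h' s \<ge> 0"
    and h0: "h t0 > 0" and tt: "t \<ge> t0"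
  shows "h t > 0"
proof (rule ccontr)
  assume "\<not> h t > 0"
  hence ht: "h t \<le> 0" by simp
  define S where "S = {t0..t} \<inter> h -` {..0}"
  have cS: "closed S" unfolding S_def
  proof (rule continuous_closed_preimage)
    show "continuous_on {t0..t} h" using cont by (rule continuous_on_subset) auto
  qed auto
  have neS: "S \<noteq> {}" using ht tt unfolding S_def by auto
  have bS: "bdd_below S" unfolding S_def by (meson IntD1 atLeastAtMost_iff bdd_below.I)
  define t1 where "t1 = Inf S"
  have t1S: "t1 \<in> S" using closed_contains_Inf[OF neS bS cS] t1_def by simp
  hence t1: "t0 \<le> t1" "h t1 \<le> 0" unfolding S_def by auto
  have below: "h s > 0" if "t0 \<le> s" "s < t1" for s
  proof (rule ccontr)
    assume "\<not> h s > 0"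
    hence "s \<in> S" using that t1S unfolding S_def by auto
    hence "t1 \<le> s" unfolding t1_def using bS by (simp add: cInf_lower)
    thus False using that by simp
  qed
  have "t0 \<noteq> t1" using t1 h0 by auto
  have "h t0 \<le> h t1"
  proof (rule DERIV_nonneg_imp_increasing_open[of t0 t1 h])
    show "t0 \<le> t1" using t1(1) .
    show "\<exists>y. (h has_real_derivative y) (at x) \<and> 0 \<le> y" if "t0 < x" "x < t1" for x
      using der[of x] pos[of x] below[of x] that by auto
    show "continuous_on {t0..t1} h" using cont by (rule continuous_on_subset) auto
  qed
  thus False using t1 h0 by simp
qed

lemma ineqF:
  fixes F :: "((real^'n) \<times> (real^'m)) \<Rightarrow>\<^sub>L (real^'n)"
  assumes "\<forall>a'. inner a' (blinfun_apply F (a',0)) \<ge> \<alpha> * (norm a')\<^sup>2"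
  shows "inner (fst p) (blinfun_apply F p) \<ge> \<alpha> * (norm (fst p))\<^sup>2
           - onorm (\<lambda>z'. blinfun_apply F (0,z')) * norm (fst p) * norm (snd p)"
proof -
  have bl: "bounded_linear (\<lambda>z'. blinfun_apply F (0::real^'n, z'))"
    by (intro bounded_linear_blinfun_apply bounded_linear_Pair bounded_linear_zero bounded_linear_ident)
  have sp: "p = (fst p, 0) + (0, snd p)" by simp
  have "blinfun_apply F p = blinfun_apply F (fst p, 0) + blinfun_apply F (0, snd p)"
    by (subst sp) (simp only: blinfun.add_right)
  hence e: "inner (fst p) (blinfun_apply F p) = inner (fst p) (blinfun_apply F (fst p, 0)) + inner (fst p) (blinfun_apply F (0, snd p))"
    by (simp add: inner_add_right)
  have "- inner (fst p) (blinfun_apply F (0, snd p)) \<le> norm (fst p) * norm (blinfun_apply F (0, snd p))"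
    using norm_cauchy_schwarz[of "- fst p" "blinfun_apply F (0, snd p)"] by simp
  also have "\<dots> \<le> norm (fst p) * (onorm (\<lambda>z'. blinfun_apply F (0,z')) * norm (snd p))"
    by (rule mult_left_mono[OF onorm[OF bl]]) simp
  finally show ?thesis using e assms[rule_format, of "fst p"] by (simp add: algebra_simps)
qed

lemma ineqG:
  fixes G :: "((real^'n) \<times> (real^'m)) \<Rightarrow>\<^sub>L (real^'m)"
  assumes "\<forall>z'. inner z' (blinfun_apply G (0,z')) \<le> l * (norm z')\<^sup>2"
  shows "inner (snd p) (blinfun_apply G p) \<le> l * (norm (snd p))\<^sup>2
           + onorm (\<lambda>a'. blinfun_apply G (a',0)) * norm (fst p) * norm (snd p)"
proof -
  have bl: "bounded_linear (\<lambda>a'. blinfun_apply G (a', 0::real^'m))"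
    by (intro bounded_linear_blinfun_apply bounded_linear_Pair bounded_linear_zero bounded_linear_ident)
  have sp: "p = (fst p, 0) + (0, snd p)" by simp
  have "blinfun_apply G p = blinfun_apply G (fst p, 0) + blinfun_apply G (0, snd p)"
    by (subst sp) (simp only: blinfun.add_right)
  hence e: "inner (snd p) (blinfun_apply G p) = inner (snd p) (blinfun_apply G (fst p, 0)) + inner (snd p) (blinfun_apply G (0, snd p))"
    by (simp add: inner_add_right)
  have "inner (snd p) (blinfun_apply G (fst p, 0)) \<le> norm (snd p) * norm (blinfun_apply G (fst p, 0))"
    using norm_cauchy_schwarz by blast
  also have "\<dots> \<le> norm (snd p) * (onorm (\<lambda>a'. blinfun_apply G (a',0)) * norm (fst p))"
    by (rule mult_left_mono[OF onorm[OF bl]]) simp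
  finally show ?thesis using e assms[rule_format, of "snd p"] by (simp add: algebra_simps)
qed



theorem lemma2p7:
  fixes f :: "(real^'n) \<times> (real^'m) \<Rightarrow> real^'n"
    and g :: "(real^'n) \<times> (real^'m) \<Rightarrow> real^'m"
    and f' :: "(real^'n) \<times> (real^'m) \<Rightarrow> (((real^'n) \<times> (real^'m)) \<Rightarrow>\<^sub>L (real^'n))"
    and g' :: "(real^'n) \<times> (real^'m) \<Rightarrow> (((real^'n) \<times> (real^'m)) \<Rightarrow>\<^sub>L (real^'m))"
    and U \<Gamma> :: "((real^'n) \<times> (real^'m)) set"
    and d c1 :: real
    and \<alpha> ell :: "(real^'n) \<times> (real^'m) \<Rightarrow> real"
    and \<Phi> :: "real \<Rightarrow> (real^'n) \<times> (real^'m) \<Rightarrow> (real^'n) \<times> (real^'m)"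
    and Q :: "real \<Rightarrow> (real^'n) \<times> (real^'m) \<Rightarrow> (((real^'n) \<times> (real^'m)) \<Rightarrow>\<^sub>L ((real^'n) \<times> (real^'m)))"
    and x :: "(real^'n) \<times> (real^'m)"
  assumes H1_open: "open U" and H1_convex: "convex U"
    and H1_d: "d > 0" and H1_cone: "\<forall>y\<in>U. Lcone y \<inter> U \<subseteq> boxB d y"
    and H2_f_deriv: "\<forall>y\<in>U. (f has_derivative blinfun_apply (f' y)) (at y)"
    and H2_g_deriv: "\<forall>y\<in>U. (g has_derivative blinfun_apply (g' y)) (at y)"
    and H2_f_C1: "continuous_on U f'" and H2_g_C1: "continuous_on U g'"
    and H2_alpha_cont: "continuous_on U \<alpha>" and H2_ell_cont: "continuous_on U ell"
    and H2_alpha_pos: "\<forall>y\<in>U. \<alpha> y > 0" and H2_ell_nonneg: "\<forall>y\<in>U. ell y \<ge> 0"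
    and H2_c1: "c1 > 0"
    and H2_Daf: "\<forall>y\<in>U. \<forall>a'. inner a' (blinfun_apply (f' y) (a', 0)) \<ge> \<alpha> y * (norm a')\<^sup>2"
    and H2_Dzg: "\<forall>y\<in>U. \<forall>z'. inner z' (blinfun_apply (g' y) (0, z')) \<le> ell y * (norm z')\<^sup>2"
    and H2_gap: "\<forall>y\<in>U. \<alpha> y \<ge> ell y + onorm (\<lambda>z'. blinfun_apply (f' y) (0, z'))
                                   + onorm (\<lambda>a'. blinfun_apply (g' y) (a', 0)) + c1"
    and H3_sub: "\<Gamma> \<subseteq> U"
    and H3_flow: "\<forall>y\<in>\<Gamma>. \<Phi> 0 y = y \<and> (\<forall>t\<ge>0. \<Phi> t y \<in> \<Gamma> \<and>
        ((\<lambda>s. \<Phi> s y) has_vector_derivative vfield f g (\<Phi> t y)) (at t within {0..}))"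
    and H3_proj: "snd ` \<Gamma> = snd ` U"
    and Q_fund: "\<forall>y\<in>\<Gamma>. Q 0 y = id_blinfun \<and> (\<forall>t\<ge>0.
        ((\<lambda>s. Q s y) has_vector_derivative (DFmat f' g' (\<Phi> t y) o\<^sub>L Q t y)) (at t within {0..}))"
    and x_in: "x \<in> \<Gamma>"
  shows "subspace (Tset Q x)"
  
proof -
  define y where "y t = \<Phi> t x" for t
  have yU: "y t \<in> U" if "t \<ge> 0" for t
    using H3_flow x_in that H3_sub unfolding y_def by blast
  define B where "B t = onorm (\<lambda>z'. blinfun_apply (f' (y t)) (0, z'))" for t
  define C where "C t = onorm (\<lambda>a'. blinfun_apply (g' (y t)) (a', 0))" for t
  define k where "k t = ell (y t) + C t" for t
  have Bnn: "B t \<ge> 0" for t unfolding B_def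
    by (intro onorm_pos_le bounded_linear_blinfun_apply bounded_linear_Pair bounded_linear_zero bounded_linear_ident)
  have Cnn: "C t \<ge> 0" for t unfolding C_def
    by (intro onorm_pos_le bounded_linear_blinfun_apply bounded_linear_Pair bounded_linear_zero bounded_linear_ident)
  have gap: "\<alpha> (y t) \<ge> ell (y t) + B t + C t + c1" if "t \<ge> 0" for t
    using H2_gap yU[OF that] unfolding B_def C_def by blast
  have ellnn: "ell (y t) \<ge> 0" if "t \<ge> 0" for t using H2_ell_nonneg yU[OF that] by blast
  define u where "u v s = blinfun_apply (Q s x) v" for v s
  define D where "D v t = (blinfun_apply (f' (y t)) (u v t), blinfun_apply (g' (y t)) (u v t))" for v t
  have Qd: "((\<lambda>s. Q s x) has_vector_derivative (DFmat f' g' (\<Phi> t x) o\<^sub>L Q t x)) (at t within {0..})"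
    if "t \<ge> 0" for t using Q_fund x_in that by blast
  have DFap: "blinfun_apply (DFmat f' g' p) w = (blinfun_apply (f' p) w, blinfun_apply (g' p) w)" for p w
  proof -
    have "bounded_linear (\<lambda>v. (blinfun_apply (f' p) v, blinfun_apply (g' p) v))"
      by (intro bounded_linear_Pair blinfun.bounded_linear_right)
    thus ?thesis unfolding DFmat_def by (simp add: bounded_linear_Blinfun_apply)
  qed
  have uderw: "(u v has_vector_derivative D v t) (at t within {0..})" if "t \<ge> 0" for v t
  proof -
    have "((\<lambda>s. blinfun_apply (Q s x) v) has_vector_derivative
        blinfun_apply (DFmat f' g' (\<Phi> t x) o\<^sub>L Q t x) v) (at t within {0..})"
      by (rule bounded_linear.has_vector_derivative[OF bounded_linear_apply_blinfun Qd[OF that]])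
    thus ?thesis unfolding u_def D_def y_def by (simp add: DFap)
  qed
  have uder: "(u v has_vector_derivative D v t) (at t)" if "t > 0" for v t
  proof -
    have "(u v has_vector_derivative D v t) (at t within {0<..})"
      using uderw[of t v] that by (rule_tac has_vector_derivative_within_subset) auto
    thus ?thesis using at_within_open[of t "{0<..}"] that by simp
  qed
  have ucont: "continuous_on {0..} (u v)" for v
    unfolding continuous_on_eq_continuous_within
    using uderw has_vector_derivative_continuous by fastforce
  have fstder: "((\<lambda>s. fst (u v s)) has_vector_derivative fst (D v t)) (at t)" if "t > 0" for v t
    by (rule bounded_linear.has_vector_derivative[OF bounded_linear_fst uder[OF that]])
  have sndder: "((\<lambda>s. snd (u v s)) has_vector_derivative snd (D v t)) (at t)" if "t > 0" for v t
    by (rule bounded_linear.has_vector_derivative[OF bounded_linear_snd uder[OF that]])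
  have pder: "((\<lambda>s. (norm (fst (u v s)))\<^sup>2) has_real_derivative
      2 * inner (fst (u v t)) (blinfun_apply (f' (y t)) (u v t))) (at t)" if "t > 0" for v t
    using normsq_deriv[OF fstder[OF that]] unfolding D_def by simp
  have qder: "((\<lambda>s. (norm (snd (u v s)))\<^sup>2) has_real_derivative
      2 * inner (snd (u v t)) (blinfun_apply (g' (y t)) (u v t))) (at t)" if "t > 0" for v t
    using normsq_deriv[OF sndder[OF that]] unfolding D_def by simp
  have iF: "inner (fst (u v t)) (blinfun_apply (f' (y t)) (u v t)) \<ge>
      \<alpha> (y t) * (norm (fst (u v t)))\<^sup>2 - B t * norm (fst (u v t)) * norm (snd (u v t))"
    if "t \<ge> 0" for v t
    unfolding B_def by (rule ineqF) (use H2_Daf yU[OF that] in blast)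
  have iG: "inner (snd (u v t)) (blinfun_apply (g' (y t)) (u v t)) \<le>
      ell (y t) * (norm (snd (u v t)))\<^sup>2 + C t * norm (fst (u v t)) * norm (snd (u v t))"
    if "t \<ge> 0" for v t
    unfolding C_def by (rule ineqG) (use H2_Dzg yU[OF that] in blast)
  have Lf: "Lfun p 0 = (norm (fst p))\<^sup>2 - (norm (snd p))\<^sup>2" for p :: "(real^'n) \<times> (real^'m)"
    unfolding Lfun_def by simp
  have Tmem: "v \<in> Tset Q x \<longleftrightarrow> (\<forall>t\<ge>0. norm (fst (u v t)) \<le> norm (snd (u v t)))" for v
    unfolding Tset_def u_def Lf by (auto simp: power2_le_iff_abs_le[symmetric] abs_le_square_iff)
  show ?thesis unfolding subspace_def
  proof (intro conjI ballI allI)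
    show "0 \<in> Tset Q x" unfolding Tmem u_def by simp
  next
    fix c :: real and v assume "v \<in> Tset Q x"
    thus "c *\<^sub>R v \<in> Tset Q x" unfolding Tmem u_def
      by (auto simp: blinfun.scaleR_right intro: mult_left_mono)
  next
    fix v1 v2 assume T1: "v1 \<in> Tset Q x" and T2: "v2 \<in> Tset Q x"
    show "v1 + v2 \<in> Tset Q x" unfolding Tmem
    proof (intro allI impI, rule ccontr)
      fix t0 :: real assume t0: "t0 \<ge> 0"
      define w where "w = v1 + v2"
      assume "\<not> norm (fst (u (v1+v2) t0)) \<le> norm (snd (u (v1+v2) t0))"
      hence ht0: "norm (snd (u w t0)) < norm (fst (u w t0))" unfolding w_def by simp
      have le1: "norm (fst (u v1 s)) \<le> norm (snd (u v1 s))" if "s \<ge> 0" for s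
        using T1 that unfolding Tmem by blast
      have le2: "norm (fst (u v2 s)) \<le> norm (snd (u v2 s))" if "s \<ge> 0" for s
        using T2 that unfolding Tmem by blast
      have uw: "u w s = u v1 s + u v2 s" for s unfolding u_def w_def by (simp add: blinfun.add_right)
      define h where "h s = (norm (fst (u w s)))\<^sup>2 - (norm (snd (u w s)))\<^sup>2" for s
      define h' where "h' s = 2 * inner (fst (u w s)) (blinfun_apply (f' (y s)) (u w s))
          - 2 * inner (snd (u w s)) (blinfun_apply (g' (y s)) (u w s))" for s
      have hpos: "h s > 0" if "s \<ge> t0" for s
      proof (rule pos_persist[of t0 h h'])
        show "continuous_on {t0..} h" unfolding h_def
          by (intro continuous_intros continuous_on_subset[OF ucont]) (use t0 in auto)
        show "(h has_real_derivative h' s) (at s)" if "s > t0" for s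
          unfolding h_def h'_def using pder[of s w] qder[of s w] that t0
          by (auto intro: DERIV_diff)
        show "h' s \<ge> 0" if "s > t0" "h s > 0" for s
        proof -
          have s0: "s \<ge> 0" using that t0 by simp
          define A where "A = norm (fst (u w s))"
          define Z where "Z = norm (snd (u w s))"
          have ZA: "Z \<le> A" "Z \<ge> 0" using that(2) unfolding h_def A_def Z_def
            by (auto simp: power2_le_iff_abs_le[symmetric] abs_le_square_iff less_imp_le
               dest: power_less_imp_less_base)
          have "B s * A * Z \<le> B s * A * A" using ZA Bnn by (simp add: mult_left_mono A_def)
          moreover have "C s * A * Z \<le> C s * A * A" using ZA Cnn by (simp add: mult_left_mono A_def)
          moreover have "ell (y s) * Z\<^sup>2 \<le> ell (y s) * A\<^sup>2"
            using ZA ellnn[OF s0] by (simp add: mult_left_mono power_mono)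
          moreover have "c1 * A\<^sup>2 \<ge> 0" using H2_c1 by simp
          moreover note iF[OF s0, of w] iG[OF s0, of w] gap[OF s0]
          moreover have "(\<alpha> (y s) - ell (y s) - B s - C s) * A\<^sup>2 \<ge> c1 * A\<^sup>2"
            using gap[OF s0] by (intro mult_right_mono) auto
          ultimately show ?thesis unfolding h'_def A_def[symmetric] Z_def[symmetric]
            by (simp add: algebra_simps power2_eq_square)
        qed
        show "h t0 > 0" using ht0 unfolding h_def by (simp add: power_strict_mono)
      qed (use that in simp)
      define p where "p s = (norm (fst (u w s)))\<^sup>2" for s
      define q where "q s = (norm (snd (u v1 s)))\<^sup>2 + (norm (snd (u v2 s)))\<^sup>2" for s
      define p' where "p' s = 2 * inner (fst (u w s)) (blinfun_apply (f' (y s)) (u w s))" for s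
      define q' where "q' s = 2 * inner (snd (u v1 s)) (blinfun_apply (g' (y s)) (u v1 s))
         + 2 * inner (snd (u v2 s)) (blinfun_apply (g' (y s)) (u v2 s))" for s
      define E where "E s = exp (2 * c1 * s)" for s
      define Gf where "Gf s = E s * q s / p s" for s
      have ZA: "norm (snd (u w s)) \<le> norm (fst (u w s))" if "s \<ge> t0" for s
        using hpos[OF that] unfolding h_def
        by (auto simp: power2_le_iff_abs_le[symmetric] abs_le_square_iff less_imp_le
               dest: power_less_imp_less_base)
      have ppos: "p s > 0" if "s \<ge> t0" for s
        using hpos[OF that] unfolding h_def p_def
        by (smt (verit) zero_le_power2)
      have qnn: "q s \<ge> 0" for s unfolding q_def by simp
      have p'b: "p' s \<ge> 2 * (k s + c1) * p s" if "s \<ge> t0" for s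
      proof -
        have s0: "s \<ge> 0" using that t0 by simp
        define A where "A = norm (fst (u w s))"
        define Z where "Z = norm (snd (u w s))"
        have "B s * A * Z \<le> B s * A * A" using ZA[OF that] Bnn by (simp add: mult_left_mono A_def Z_def)
        moreover note iF[OF s0, of w] gap[OF s0]
        moreover have "(\<alpha> (y s) - B s) * A\<^sup>2 \<ge> (k s + c1) * A\<^sup>2"
          using gap[OF s0] unfolding k_def by (intro mult_right_mono) auto
        ultimately show ?thesis unfolding p'_def p_def A_def[symmetric] Z_def[symmetric]
          by (simp add: algebra_simps power2_eq_square)
      qed
      have q'b1: "2 * inner (snd (u v s)) (blinfun_apply (g' (y s)) (u v s)) \<le> 2 * k s * (norm (snd (u v s)))\<^sup>2"
        if "s \<ge> 0" "norm (fst (u v s)) \<le> norm (snd (u v s))" for s v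
      proof -
        define A where "A = norm (fst (u v s))"
        define Z where "Z = norm (snd (u v s))"
        have "C s * A * Z \<le> C s * Z * Z" using that Cnn
          by (simp add: mult_left_mono mult_right_mono A_def Z_def)
        moreover note iG[OF that(1), of v]
        ultimately show ?thesis unfolding k_def A_def[symmetric] Z_def[symmetric]
          by (simp add: algebra_simps power2_eq_square)
      qed
      have q'b: "q' s \<le> 2 * k s * q s" if "s \<ge> 0" for s
        using q'b1[OF that le1[OF that]] q'b1[OF that le2[OF that]] unfolding q'_def q_def
        by (simp add: algebra_simps)
      have Gdec: "Gf t \<le> Gf t0" if "t \<ge> t0" for t
      proof (rule DERIV_nonpos_imp_decreasing_open[of t0 t Gf])
        show "t0 \<le> t" by fact
        show "continuous_on {t0..t} Gf" unfolding Gf_def E_def q_def p_def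
          apply (intro continuous_intros continuous_on_subset[OF ucont])
          subgoal using t0 by auto
          subgoal using t0 by auto
          subgoal using t0 by auto
          using ppos unfolding p_def by (metis atLeastAtMost_iff less_irrefl)
        show "\<exists>D. (Gf has_real_derivative D) (at s) \<and> D \<le> 0" if "t0 < s" "s < t" for s
        proof -
          have s0: "s > 0" using that t0 by simp
          have dE: "(E has_real_derivative E s * (2 * c1)) (at s)" unfolding E_def
            by (auto intro!: derivative_eq_intros)
          have dq: "(q has_real_derivative q' s) (at s)" unfolding q_def q'_def
            using qder[OF s0, of v1] qder[OF s0, of v2] by (auto intro: DERIV_add)
          have dp: "(p has_real_derivative p' s) (at s)" unfolding p_def p'_def
            using pder[OF s0, of w] by simp
          have ps: "p s > 0" using ppos that by simp
          have dG: "(Gf has_real_derivative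
             ((E s * (2 * c1) * q s + E s * q' s) * p s - E s * q s * p' s) / (p s * p s)) (at s)"
            unfolding Gf_def[abs_def]
            using DERIV_divide[OF DERIV_mult[OF dE dq] dp] ps by (simp add: mult.commute)
          have e1: "q' s * p s \<le> (2 * k s * q s) * p s"
            using q'b[of s] s0 ps by (intro mult_right_mono) auto
          have e2: "q s * (2 * (k s + c1) * p s) \<le> q s * p' s"
            using p'b[of s] that qnn by (intro mult_left_mono) auto
          have "(E s * (2 * c1) * q s + E s * q' s) * p s - E s * q s * p' s
              = E s * (2 * c1 * q s * p s + q' s * p s - q s * p' s)" by (simp add: algebra_simps)
          moreover have "2 * c1 * q s * p s + q' s * p s - q s * p' s \<le> 0"
            using e1 e2 by (simp add: algebra_simps)
          moreover have "E s > 0" unfolding E_def by simp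
          ultimately have "(E s * (2 * c1) * q s + E s * q' s) * p s - E s * q s * p' s \<le> 0"
            by (simp add: mult_nonneg_nonpos)
          hence "((E s * (2 * c1) * q s + E s * q' s) * p s - E s * q s * p' s) / (p s * p s) \<le> 0"
            using ps by (simp add: divide_nonpos_pos)
          thus ?thesis using dG by blast
        qed
      qed
      define G0 where "G0 = Gf t0"
      have G0nn: "G0 \<ge> 0" unfolding G0_def Gf_def E_def using qnn ppos[of t0] by simp
      define T where "T = max t0 (G0 / c1)"
      have Tt0: "T \<ge> t0" unfolding T_def by simp
      have T0: "T \<ge> 0" using Tt0 t0 by simp
      have pq: "p T \<le> 2 * q T"
      proof -
        have "norm (fst (u w T)) \<le> norm (fst (u v1 T)) + norm (fst (u v2 T))"
          unfolding uw by (simp add: norm_triangle_ineq)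
        also have "\<dots> \<le> norm (snd (u v1 T)) + norm (snd (u v2 T))" using le1[OF T0] le2[OF T0] by simp
        finally have "p T \<le> (norm (snd (u v1 T)) + norm (snd (u v2 T)))\<^sup>2"
          unfolding p_def by (simp add: power_mono)
        also have "\<dots> \<le> 2 * q T" unfolding q_def
          using sum_squares_ge_zero
          by (smt (verit) power2_diff power2_sum zero_le_power2)
        finally show ?thesis .
      qed
      have "E T / 2 \<le> Gf T"
      proof -
        have pT: "p T > 0" using ppos[OF Tt0] .
        have "q T / p T \<ge> 1/2" using pq pT by (simp add: field_simps)
        hence "E T * (q T / p T) \<ge> E T * (1/2)" unfolding E_def by (intro mult_left_mono) auto
        thus ?thesis unfolding Gf_def by simp
      qed
      moreover have "E T \<ge> 1 + 2 * c1 * T" unfolding E_def by (rule exp_ge_add_one_self)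
      moreover have "c1 * T \<ge> G0" unfolding T_def using H2_c1
        by (simp add: field_simps max_def)
      moreover have "Gf T \<le> G0" using Gdec[OF Tt0] unfolding G0_def .
      ultimately show False by linarith
    qed
  qed
qed

end
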